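(* Let $\beta_1,\dots,\beta_p\in\mathbb{R}$, $\delta_1^2,\dots,\delta_p^2>0$, $\sigma^2>0$, $\nu>0$, and $\Sigma=\sigma^2\boldsymbol\beta\boldsymbol\beta^\top+\mathrm{diag}(\delta_1^2,\dots,\delta_p^2)$. Let $k_p$ be the number of strictly positive entries of the long-only minimum variance portfolio (the minimizer of $w^\top\Sigma w$ subject to $\sum_iw_i=1$, $w_i\ge0$). Define $$G_p(y)=\frac{\nu^2}{p\sigma^2}+\frac{\nu^2}{p}\sum_{j=1}^p\frac{\beta_j}{\delta_j^2}(\beta_j-y)\mathbf{1}_{\{\beta_j\le y\}}.$$ Suppose $\frac1p\sum_{i=1}^p\beta_i/\delta_i^2>0$ and $G_p$ has a unique zero $\beta^*(p)\in(0,\infty)$. Then $$k_p=\sum_{i=1}^p\mathbf{1}_{\{\beta_i<\beta^*(p)\}},$$ i.e. $k_p/p=F_p(\beta^*(p)^-)$, where $F_p$ is the empirical cdf of $\beta_1,\dots,\beta_p$ and $F_p(t^-)$ denotes its left limit at $t$.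
   Context: In the paper $\nu$ is defined by $1/\nu^2=\mathbb{E}[1/\delta^2]$ for the distribution from which the $\delta_j^2$ are drawn; only $\nu>0$ matters here. *)

theory Defs
  imports Complex_Main
begin

text \<open>Indices are 0,...,p-1. Sigma = sigma2 * beta beta^T + diag(delta2).\<close>

definition Sigma_mat :: "real \<Rightarrow> (nat \<Rightarrow> real) \<Rightarrow> (nat \<Rightarrow> real) \<Rightarrow> nat \<Rightarrow> nat \<Rightarrow> real" where
  "Sigma_mat sigma2 beta delta2 i j =
     sigma2 * beta i * beta j + (if i = j then delta2 i else 0)"

definition port_var :: "nat \<Rightarrow> real \<Rightarrow> (nat \<Rightarrow> real) \<Rightarrow> (nat \<Rightarrow> real) \<Rightarrow> (nat \<Rightarrow> real) \<Rightarrow> real" where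
  "port_var p sigma2 beta delta2 w =
     (\<Sum>i<p. \<Sum>j<p. w i * Sigma_mat sigma2 beta delta2 i j * w j)"

definition long_only :: "nat \<Rightarrow> (nat \<Rightarrow> real) \<Rightarrow> bool" where
  "long_only p w \<longleftrightarrow> (\<Sum>i<p. w i) = 1 \<and> (\<forall>i<p. w i \<ge> 0)"

definition is_lo_minvar :: "nat \<Rightarrow> real \<Rightarrow> (nat \<Rightarrow> real) \<Rightarrow> (nat \<Rightarrow> real) \<Rightarrow> (nat \<Rightarrow> real) \<Rightarrow> bool" where
  "is_lo_minvar p sigma2 beta delta2 w \<longleftrightarrow>
     long_only p w \<and>
     (\<forall>v. long_only p v \<longrightarrow> port_var p sigma2 beta delta2 w \<le> port_var p sigma2 beta delta2 v)"

definition G_p :: "nat \<Rightarrow> real \<Rightarrow> real \<Rightarrow> (nat \<Rightarrow> real) \<Rightarrow> (nat \<Rightarrow> real) \<Rightarrow> real \<Rightarrow> real" where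
  "G_p p nu sigma2 beta delta2 y =
     nu^2 / (real p * sigma2) +
     nu^2 / real p * (\<Sum>j<p. beta j / delta2 j * (beta j - y) * (if beta j \<le> y then 1 else 0))"

end

theory Submission
  imports Defs
begin

lemma pv_formula:
  "port_var p s beta d x = s * (\<Sum>i<p. beta i * x i)^2 + (\<Sum>i<p. d i * (x i)^2)"
proof -
  have "port_var p s beta d x =
     (\<Sum>i<p. \<Sum>j<p. s * (beta i * x i) * (beta j * x j)) +
     (\<Sum>i<p. \<Sum>j<p. (if i = j then d i * x i * x j else 0))"
    unfolding port_var_def Sigma_mat_def sum.distrib[symmetric]
    by (intro sum.cong refl) (auto simp: algebra_simps)
  also have "(\<Sum>i<p. \<Sum>j<p. (if i = j then d i * x i * x j else 0)) = (\<Sum>i<p. d i * (x i)^2)"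
    by (simp add: power2_eq_square mult.assoc)
  also have "s * (\<Sum>i<p. beta i * x i)^2 = s * (\<Sum>i<p. \<Sum>j<p. (beta i * x i) * (beta j * x j))"
    by (simp add: power2_eq_square sum_product)
  then have "(\<Sum>i<p. \<Sum>j<p. s * (beta i * x i) * (beta j * x j)) = s * (\<Sum>i<p. beta i * x i)^2"
    by (simp add: sum_distrib_left mult.assoc)
  finally show ?thesis by simp
qed

theorem lemma4:
  fixes p :: nat and beta delta2 w :: "nat \<Rightarrow> real"
    and sigma2 nu bstar :: real
  assumes delta_pos: "\<forall>i<p. delta2 i > 0"
    and sigma_pos: "sigma2 > 0"
    and nu_pos: "nu > 0"
    and mean_pos: "(1 / real p) * (\<Sum>i<p. beta i / delta2 i) > 0"
    and bstar_pos: "bstar > 0"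
    and bstar_zero: "G_p p nu sigma2 beta delta2 bstar = 0"
    and bstar_unique: "\<forall>y>0. G_p p nu sigma2 beta delta2 y = 0 \<longrightarrow> y = bstar"
    and w_min: "is_lo_minvar p sigma2 beta delta2 w"
  shows "card {i. i < p \<and> w i > 0} = card {i. i < p \<and> beta i < bstar}"
proof -
  define a where "a i = (if beta i < bstar then (bstar - beta i) / delta2 i else 0)" for i
  have p0: "p > 0" using mean_pos by (cases p) auto
  have a_nn: "a i \<ge> 0" if "i < p" for i using delta_pos that by (auto simp: a_def)
  have a_pos: "a i > 0 \<longleftrightarrow> beta i < bstar" if "i < p" for i
    using delta_pos that by (auto simp: a_def)
  have T: "(\<Sum>j<p. beta j / delta2 j * (beta j - bstar) * (if beta j \<le> bstar then 1 else 0))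
       = - (\<Sum>i<p. beta i * a i)"
    unfolding sum_negf[symmetric]
    by (intro sum.cong refl) (auto simp: a_def minus_divide_left algebra_simps)
  define X where "X = (\<Sum>i<p. beta i * a i)"
  have "nu^2 / (real p * sigma2) + nu^2 / real p * (- X) = 0"
    using bstar_zero T unfolding G_p_def X_def by simp
  moreover have "nu^2 / (real p * sigma2) = nu^2 / real p * (1 / sigma2)" by simp
  ultimately have "nu^2 / real p * (1 / sigma2) - nu^2 / real p * X = 0" by linarith
  then have "nu^2 / real p * (1 / sigma2 - X) = 0" by (simp only: right_diff_distrib)
  moreover have h: "nu^2 / real p \<noteq> 0" using nu_pos p0 by simp
  ultimately have "1 / sigma2 - X = 0" by (metis mult_eq_0_iff)
  then have Ba: "X = 1 / sigma2" by simp
  define S where "S = (\<Sum>i<p. a i)"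
  have S_nn: "S \<ge> 0" unfolding S_def using a_nn by (intro sum_nonneg) auto
  have S_pos: "S > 0"
  proof (rule ccontr)
    assume "\<not> S > 0"
    then have "S = 0" using S_nn by simp
    then have "\<forall>i\<in>{..<p}. a i = 0" unfolding S_def using a_nn
      by (subst sum_nonneg_eq_0_iff[symmetric]) auto
    then have "X = 0" unfolding X_def by simp
    then show False using Ba sigma_pos by simp
  qed
  define u where "u i = a i / S" for i
  define Bu where "Bu = (\<Sum>i<p. beta i * u i)"
  have Bu_eq: "Bu = 1 / (sigma2 * S)"
    unfolding Bu_def u_def using Ba unfolding X_def
  proof -
    have "(\<Sum>i<p. beta i * (a i / S)) = (\<Sum>i<p. beta i * a i) / S"
      by (simp add: sum_divide_distrib)
    then show "(\<Sum>i<p. beta i * (a i / S)) = 1 / (sigma2 * S)" using Ba unfolding X_def by simp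
  qed
  have grad: "delta2 i * u i + sigma2 * Bu * beta i = max (beta i) bstar / S" if "i < p" for i
    using delta_pos that sigma_pos S_pos unfolding Bu_eq u_def a_def
    by (auto simp: field_simps max_def)
  have u_sum: "(\<Sum>i<p. u i) = 1" unfolding u_def S_def[symmetric]
    using S_pos by (simp add: sum_divide_distrib[symmetric] S_def)
  have lo_u: "long_only p u" unfolding long_only_def using u_sum a_nn S_pos
    by (auto simp: u_def)
  have key: "port_var p sigma2 beta delta2 v \<ge>
      port_var p sigma2 beta delta2 u + (\<Sum>i<p. delta2 i * (v i - u i)^2)"
    if lv: "long_only p v" for v
  proof -
    define Bv where "Bv = (\<Sum>i<p. beta i * v i)"
    have br: "(\<Sum>i<p. (v i - u i) * (max (beta i) bstar / S)) \<ge> 0"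
    proof -
      have "(\<Sum>i<p. (v i - u i) * (max (beta i) bstar / S)) =
          (\<Sum>i<p. (v i - u i) * ((max (beta i) bstar - bstar) / S)) + (\<Sum>i<p. (v i - u i)) * (bstar / S)"
        unfolding sum_distrib_right sum.distrib[symmetric]
        by (intro sum.cong refl) (simp add: diff_divide_distrib algebra_simps)
      also have "(\<Sum>i<p. (v i - u i)) = 0" using lv u_sum
        by (simp add: sum_subtractf long_only_def)
      also have "(\<Sum>i<p. (v i - u i) * ((max (beta i) bstar - bstar) / S)) \<ge> 0"
      proof (rule sum_nonneg)
        fix i assume i: "i \<in> {..<p}"
        show "(v i - u i) * ((max (beta i) bstar - bstar) / S) \<ge> 0"
        proof (cases "beta i < bstar")
          case True then show ?thesis by simp
        next
          case False
          then have "u i = 0" by (simp add: u_def a_def)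
          moreover have "v i \<ge> 0" using lv i by (auto simp: long_only_def)
          ultimately show ?thesis using S_pos False by simp
        qed
      qed
      ultimately show ?thesis by simp
    qed
    have "(\<Sum>i<p. (v i - u i) * (max (beta i) bstar / S)) =
        (\<Sum>i<p. (v i - u i) * (delta2 i * u i + sigma2 * Bu * beta i))"
      using grad by (intro sum.cong refl) auto
    also have "\<dots> = (\<Sum>i<p. delta2 i * u i * (v i - u i)) + sigma2 * Bu * (Bv - Bu)"
      unfolding Bv_def Bu_def
      by (simp add: sum_distrib_left sum.distrib[symmetric] sum_subtractf[symmetric] algebra_simps)
    finally have br2: "(\<Sum>i<p. delta2 i * u i * (v i - u i)) + sigma2 * Bu * (Bv - Bu) \<ge> 0"
      using br by simp
    have "port_var p sigma2 beta delta2 v - port_var p sigma2 beta delta2 u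
        - (\<Sum>i<p. delta2 i * (v i - u i)^2)
        = sigma2 * (Bv - Bu)^2 + 2 * ((\<Sum>i<p. delta2 i * u i * (v i - u i)) + sigma2 * Bu * (Bv - Bu))"
    proof -
      have "(\<Sum>i<p. delta2 i * (v i)^2) - (\<Sum>i<p. delta2 i * (u i)^2) - (\<Sum>i<p. delta2 i * (v i - u i)^2)
          = 2 * (\<Sum>i<p. delta2 i * u i * (v i - u i))"
        by (simp add: sum_subtractf[symmetric] sum_distrib_left power2_eq_square algebra_simps)
      then show ?thesis unfolding pv_formula Bv_def[symmetric] Bu_def[symmetric]
        by (simp add: power2_eq_square algebra_simps)
    qed
    moreover have "sigma2 * (Bv - Bu)^2 \<ge> 0" using sigma_pos by simp
    moreover have gen: "\<And>A B C D E::real. A - B - C = D + 2*E \<Longrightarrow> 0 \<le> D \<Longrightarrow> 0 \<le> E \<Longrightarrow> B + C \<le> A"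
      by linarith
    ultimately show ?thesis using br2 by blast
  qed
  have wl: "long_only p w" and wm: "port_var p sigma2 beta delta2 w \<le> port_var p sigma2 beta delta2 u"
    using w_min lo_u unfolding is_lo_minvar_def by auto
  have "(\<Sum>i<p. delta2 i * (w i - u i)^2) \<le> 0" using key[OF wl] wm by linarith
  moreover have nn: "\<forall>i\<in>{..<p}. delta2 i * (w i - u i)^2 \<ge> 0" using delta_pos by auto
  ultimately have "(\<Sum>i<p. delta2 i * (w i - u i)^2) = 0"
    by (meson antisym sum_nonneg)
  then have z0: "\<forall>i\<in>{..<p}. delta2 i * (w i - u i)^2 = 0"
    using nn by (subst sum_nonneg_eq_0_iff[symmetric]) auto
  then have wu: "w i = u i" if "i < p" for i
  proof -
    have "delta2 i * (w i - u i)^2 = 0" "delta2 i > 0" using that delta_pos z0 by auto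
    then show ?thesis by simp
  qed
  have "{i. i < p \<and> w i > 0} = {i. i < p \<and> beta i < bstar}"
    using wu a_pos S_pos by (auto simp: u_def zero_less_divide_iff)
  then show ?thesis by simp
qed

end
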